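(* Let $q$ be a prime power, $k\ge 2$, and let $\mathcal{L}$ be a Cameron-Liebler $k$-set of $\mathrm{AG}(n,q)$ with parameter $x$. Let $0\le i\le k-2$, let $I$ be an $i$-dimensional subspace of $\pi_\infty$, and let $\pi$ be an $(n-i-1)$-dimensional subspace of $\mathrm{PG}(n,q)$ disjoint from $I$. Let $\pi_A=\pi\setminus(\pi\cap\pi_\infty)$, an affine space isomorphic to $\mathrm{AG}(n-i-1,q)$ with hyperplane at infinity $\pi\cap\pi_\infty$, and let $\mathcal{J}=\{K\cap\pi: K\in\mathcal{L},\ I\subseteq K\}$, a set of $(k-i-1)$-spaces of $\pi_A$. If $n\ge 2k-i$ (and $n\ge k+2$), then $\mathcal{J}$ is a Cameron-Liebler $(k-i-1)$-set of $\pi_A$ with parameter $x$.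
   Context: $\mathrm{AG}(n,q)$ is $\mathrm{PG}(n,q)$ with a hyperplane $\pi_\infty$ removed; affine points are points outside $\pi_\infty$, affine $k$-spaces are $k$-dimensional projective subspaces not contained in $\pi_\infty$. For an affine space $\mathrm{AG}(m,q)$ and $1\le j\le m-1$, with $A$ the incidence matrix of its affine points versus affine $j$-spaces, a set $\mathcal{M}$ of affine $j$-spaces is a Cameron-Liebler $j$-set if its characteristic vector lies in the real row space $\mathrm{Im}(A^T)$; its parameter is $|\mathcal{M}|/\left[{m\atop j}\right]_q$, where $\left[{a\atop b}\right]_q=\frac{(q^a-1)\cdots(q^{a-b+1}-1)}{(q^b-1)\cdots(q-1)}$. *)

theory Defs
  imports "HOL-Analysis.Analysis"
begin

text \<open>Model: PG(n,q) is the lattice of linear subspaces of the vector space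
  'a^'n over a finite field 'a (q = CARD('a)), with n = CARD('n) - 1.
  A projective d-space is a linear subspace of (vector) dimension d+1.\<close>

definition proj_subspaces :: "nat \<Rightarrow> ('a::field ^ 'n::finite) set \<Rightarrow> ('a ^ 'n) set set" where
  "proj_subspaces d U = {S. vec.subspace S \<and> S \<subseteq> U \<and> vec.dim S = d + 1}"

text \<open>Affine space determined by a projective space U (a linear subspace) with
  hyperplane at infinity H: affine points / affine j-spaces are the projective
  points / j-spaces of U not contained in H.\<close>

definition aff_points :: "('a::field ^ 'n::finite) set \<Rightarrow> ('a ^ 'n) set \<Rightarrow> ('a ^ 'n) set set" where
  "aff_points U H = {p \<in> proj_subspaces 0 U. \<not> p \<subseteq> H}"

definition aff_spaces :: "nat \<Rightarrow> ('a::field ^ 'n::finite) set \<Rightarrow> ('a ^ 'n) set \<Rightarrow> ('a ^ 'n) set set" where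
  "aff_spaces j U H = {K \<in> proj_subspaces j U. \<not> K \<subseteq> H}"

text \<open>Cameron-Liebler j-set: the characteristic vector of M lies in the real row
  space Im(A^T) of the point/j-space incidence matrix A, i.e. it equals A^T v for
  some real vector v indexed by affine points.\<close>

definition CL_set :: "nat \<Rightarrow> ('a::field ^ 'n::finite) set \<Rightarrow> ('a ^ 'n) set \<Rightarrow> ('a ^ 'n) set set \<Rightarrow> bool" where
  "CL_set j U H M \<longleftrightarrow> M \<subseteq> aff_spaces j U H \<and>
     (\<exists>v :: ('a ^ 'n) set \<Rightarrow> real. \<forall>K \<in> aff_spaces j U H.
        (if K \<in> M then 1 else 0) = (\<Sum>p \<in> aff_points U H. v p * (if p \<subseteq> K then 1 else 0)))"

definition qbinom :: "real \<Rightarrow> nat \<Rightarrow> nat \<Rightarrow> real" where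
  "qbinom q a b = (\<Prod>t<b. (q ^ (a - t) - 1) / (q ^ (t + 1) - 1))"

text \<open>Parameter of a CL j-set in the affine space with projective closure U,
  of dimension m = dim U - 1 (projective dimension).\<close>
definition CL_param :: "nat \<Rightarrow> ('a::{finite,field} ^ 'n::finite) set \<Rightarrow> ('a ^ 'n) set set \<Rightarrow> real" where
  "CL_param j U M = real (card M) / qbinom (real CARD('a)) (vec.dim U - 1) j"

end

theory Submission
  imports Defs
begin

definition ssum :: "('a::field ^ 'n::finite) set \<Rightarrow> ('a ^ 'n) set \<Rightarrow> ('a ^ 'n) set" where
  "ssum S T = {x + y |x y. x \<in> S \<and> y \<in> T}"

lemma ssum_subspace: "vec.subspace S \<Longrightarrow> vec.subspace T \<Longrightarrow> vec.subspace (ssum S T)"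
  unfolding ssum_def by (rule vec.subspace_sums)

lemma ssum_left: "vec.subspace T \<Longrightarrow> S \<subseteq> ssum S T"
  unfolding ssum_def using vec.subspace_0 by force

lemma ssum_right: "vec.subspace S \<Longrightarrow> T \<subseteq> ssum S T"
  unfolding ssum_def using vec.subspace_0 by force

lemma ssum_least: "vec.subspace U \<Longrightarrow> S \<subseteq> U \<Longrightarrow> T \<subseteq> U \<Longrightarrow> ssum S T \<subseteq> U"
  unfolding ssum_def using vec.subspace_add by blast

lemma ssum_mono: "S \<subseteq> S' \<Longrightarrow> T \<subseteq> T' \<Longrightarrow> ssum S T \<subseteq> ssum S' T'"
  unfolding ssum_def by blast

lemma ssum_modular:
  assumes "vec.subspace I" "vec.subspace X" "vec.subspace P" "I \<subseteq> X"
  shows "X \<inter> ssum I P = ssum I (X \<inter> P)"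
proof
  show "X \<inter> ssum I P \<subseteq> ssum I (X \<inter> P)"
  proof
    fix z assume z: "z \<in> X \<inter> ssum I P"
    then obtain a b where ab: "z = a + b" "a \<in> I" "b \<in> P" unfolding ssum_def by blast
    have "b = z - a" using ab by simp
    moreover have "z - a \<in> X" using z ab assms vec.subspace_diff by blast
    ultimately show "z \<in> ssum I (X \<inter> P)" using ab unfolding ssum_def by blast
  qed
next
  show "ssum I (X \<inter> P) \<subseteq> X \<inter> ssum I P"
    using assms unfolding ssum_def using vec.subspace_add by blast
qed

lemma ssum_cap_back:
  assumes "vec.subspace I" "vec.subspace Y" "vec.subspace P" "Y \<subseteq> P" "I \<inter> P = {0}"
  shows "ssum I Y \<inter> P = Y"
proof
  show "ssum I Y \<inter> P \<subseteq> Y"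
  proof
    fix z assume z: "z \<in> ssum I Y \<inter> P"
    then obtain a b where ab: "z = a + b" "a \<in> I" "b \<in> Y" unfolding ssum_def by blast
    have "a = z - b" using ab by simp
    moreover have "z - b \<in> P" using z ab assms vec.subspace_diff by blast
    ultimately have "a = 0" using ab assms by blast
    then show "z \<in> Y" using ab by simp
  qed
next
  show "Y \<subseteq> ssum I Y \<inter> P" using assms ssum_right by blast
qed

lemma dim_direct:
  assumes "vec.subspace S" "vec.subspace T" "S \<inter> T \<subseteq> {0}"
  shows "vec.dim (ssum S T) = vec.dim S + vec.dim T"
proof -
  have "vec.dim (S \<inter> T) = 0" using assms(3) vec.dim_eq_0 by blast
  then show ?thesis using vec.dim_sums_Int[OF assms(1,2)] unfolding ssum_def by linarith
qed

lemma subspace_eq_dim: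
  assumes "vec.subspace S" "vec.subspace T" "S \<subseteq> T" "vec.dim T \<le> vec.dim S"
  shows "S = T"
  using vec.subspace_dim_equal assms by blast

lemma dim_zero_sub: "vec.subspace S \<Longrightarrow> vec.dim S = 0 \<Longrightarrow> S = {0}"
  using vec.dim_eq_0 vec.subspace_0 by blast

lemma point_disj:
  assumes "vec.subspace p" "vec.subspace I" "vec.dim p = 1" "\<not> p \<subseteq> I"
  shows "p \<inter> I = {0}"
proof -
  have s: "vec.subspace (p \<inter> I)" using assms vec.subspace_inter by blast
  have "vec.dim (p \<inter> I) \<le> 1" using vec.dim_subset[of "p \<inter> I" p] assms by simp
  moreover have "vec.dim (p \<inter> I) \<noteq> 1"
  proof
    assume "vec.dim (p \<inter> I) = 1"
    then have "p \<inter> I = p" using subspace_eq_dim[OF s assms(1)] assms by simp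
    then show False using assms by blast
  qed
  ultimately have "vec.dim (p \<inter> I) = 0" by linarith
  then show ?thesis using dim_zero_sub[OF s] by blast
qed

lemma card_subspace:
  fixes S :: "('a::{finite,field} ^ 'n::finite) set"
  assumes "vec.subspace S"
  shows "card S = CARD('a) ^ vec.dim S"
proof -
  obtain B where B: "B \<subseteq> S" "vec.independent B" "S \<subseteq> vec.span B" "card B = vec.dim S"
    by (rule vec.basis_exists)
  have fB: "finite B" by simp
  have spanB: "vec.span B = S" using B assms vec.span_subspace by blast
  define f where "f u = (\<Sum>v\<in>B. u v *s v)" for u :: "('a ^ 'n) \<Rightarrow> 'a"
  have fr: "f u = f (restrict u B)" for u unfolding f_def by (rule sum.cong) auto
  have img: "f ` (PiE B (\<lambda>_. UNIV)) = S"
  proof -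
    have "S = range f" using spanB vec.span_finite[OF fB] unfolding f_def by simp
    also have "\<dots> = f ` (PiE B (\<lambda>_. UNIV))"
    proof
      show "range f \<subseteq> f ` (PiE B (\<lambda>_. UNIV))"
      proof
        fix z assume "z \<in> range f"
        then obtain u where "z = f u" by blast
        then have "z = f (restrict u B)" using fr by simp
        moreover have "restrict u B \<in> PiE B (\<lambda>_. UNIV)" by simp
        ultimately show "z \<in> f ` (PiE B (\<lambda>_. UNIV))" by blast
      qed
    qed auto
    finally show ?thesis by simp
  qed
  have inj: "inj_on f (PiE B (\<lambda>_. UNIV))"
  proof (rule inj_onI)
    fix u u' assume u: "u \<in> PiE B (\<lambda>_. UNIV)" and u': "u' \<in> PiE B (\<lambda>_. UNIV)" and eq: "f u = f u'"
    have "(\<Sum>v\<in>B. (u v - u' v) *s v) = f u - f u'"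
      unfolding f_def by (simp add: vec.scale_left_diff_distrib sum_subtractf)
    also have "\<dots> = 0" using eq by simp
    finally have z: "(\<Sum>v\<in>B. (u v - u' v) *s v) = 0" .
    have "\<forall>c. (\<Sum>v\<in>B. c v *s v) = 0 \<longrightarrow> (\<forall>v\<in>B. c v = 0)"
      using B(2) vec.independent_explicit[of B] by blast
    from this[rule_format, of "\<lambda>v. u v - u' v"] z have "\<forall>v\<in>B. u v - u' v = 0" by simp
    then have "\<forall>v\<in>B. u v = u' v" by simp
    then show "u = u'" using u u' by (metis PiE_ext)
  qed
  have "card S = card (PiE B (\<lambda>_. UNIV :: 'a set))"
    using card_image[OF inj] img by simp
  also have "\<dots> = CARD('a) ^ card B" by (simp add: card_PiE fB)
  finally show ?thesis using B by simp
qed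

lemma complement_exists:
  assumes "vec.subspace P" "vec.subspace U" "P \<subseteq> U"
  obtains H where "vec.subspace H" "H \<subseteq> U" "P \<inter> H = {0}" "ssum P H = U"
    "vec.dim H = vec.dim U - vec.dim P"
proof -
  obtain B where B: "B \<subseteq> P" "vec.independent B" "P \<subseteq> vec.span B" "card B = vec.dim P"
    by (rule vec.basis_exists)
  obtain C where C: "B \<subseteq> C" "C \<subseteq> U" "vec.independent C" "U \<subseteq> vec.span C"
    using vec.maximal_independent_subset_extend[of B U] B assms by blast
  define H where "H = vec.span (C - B)"
  have fC: "finite C" using C vec.independent_bound_general by blast
  have sB: "vec.span B = P" using B assms vec.span_subspace by blast
  have sC: "vec.span C = U" using C assms vec.span_subspace by blast
  have subH: "vec.subspace H" unfolding H_def by (rule vec.subspace_span)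
  have HU: "H \<subseteq> U" unfolding H_def using C assms vec.span_minimal by blast
  have sum: "ssum P H = U"
  proof -
    have "ssum P H = vec.span (B \<union> (C - B))" unfolding ssum_def H_def vec.span_Un sB by simp
    also have "B \<union> (C - B) = C" using C by blast
    finally show ?thesis using sC by simp
  qed
  have dC: "vec.dim U = card C" using sC vec.dim_span_eq_card_independent[OF C(3)] by simp
  have dH: "vec.dim H = card (C - B)" unfolding H_def
    using vec.dim_span_eq_card_independent vec.independent_mono[OF C(3)] by blast
  have cD: "card (C - B) = card C - card B" using C fC by (meson card_Diff_subset finite_subset)
  have cB: "card B \<le> card C" using C fC card_mono by blast
  have "vec.dim (ssum P H) + vec.dim (P \<inter> H) = vec.dim P + vec.dim H"
    using vec.dim_sums_Int[OF assms(1) subH] unfolding ssum_def by simp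
  then have "vec.dim (P \<inter> H) = 0" using sum dC dH cD cB B by simp
  then have "P \<inter> H = {0}" using dim_zero_sub vec.subspace_inter assms subH by blast
  then show ?thesis using that subH HU sum dH dC cD B by simp
qed

lemma corr_card:
  assumes P: "vec.subspace P" and H: "vec.subspace H" and U: "vec.subspace U"
    and disj: "P \<inter> H = {0}" and sum: "ssum P H = U"
  shows "card {S. vec.subspace S \<and> P \<subseteq> S \<and> S \<subseteq> U \<and> vec.dim S = vec.dim P + e}
       = card {T. vec.subspace T \<and> T \<subseteq> H \<and> vec.dim T = e}"
proof (rule bij_betw_same_card[of "\<lambda>S. S \<inter> H"], rule bij_betw_byWitness[where f' = "ssum P"])
  let ?A = "{S. vec.subspace S \<and> P \<subseteq> S \<and> S \<subseteq> U \<and> vec.dim S = vec.dim P + e}"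
  let ?B = "{T. vec.subspace T \<and> T \<subseteq> H \<and> vec.dim T = e}"
  have hback: "S = ssum P (S \<inter> H)" if "S \<in> ?A" for S
  proof -
    have "S \<inter> ssum P H = ssum P (S \<inter> H)" using ssum_modular[of P S H] that P H by blast
    then show ?thesis using that sum by blast
  qed
  show "\<forall>S\<in>?A. ssum P (S \<inter> H) = S" using hback by blast
  show "\<forall>T\<in>?B. ssum P T \<inter> H = T" using ssum_cap_back P H disj by blast
  show "(\<lambda>S. S \<inter> H) ` ?A \<subseteq> ?B"
  proof
    fix T assume "T \<in> (\<lambda>S. S \<inter> H) ` ?A"
    then obtain S where S: "S \<in> ?A" "T = S \<inter> H" by blast
    have sT: "vec.subspace T" using S H vec.subspace_inter by blast
    have "vec.dim S = vec.dim P + vec.dim T"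
      using dim_direct[OF P sT] hback[OF S(1)] S disj by auto
    then show "T \<in> ?B" using S sT by simp
  qed
  show "ssum P ` ?B \<subseteq> ?A"
  proof
    fix S assume "S \<in> ssum P ` ?B"
    then obtain T where T: "T \<in> ?B" "S = ssum P T" by blast
    have "vec.dim S = vec.dim P + e" using dim_direct[of P T] T P disj by auto
    moreover have "vec.subspace S" using ssum_subspace T P by blast
    moreover have "P \<subseteq> S" using ssum_left T by blast
    moreover have "S \<subseteq> U" using T sum ssum_mono[of P P T H] by blast
    ultimately show "S \<in> ?A" by blast
  qed
qed

lemma qbinom_0 [simp]: "qbinom q a 0 = 1"
  unfolding qbinom_def by simp

lemma qbinom_Suc:
  "qbinom q m (Suc d) = (q ^ m - 1) / (q ^ Suc d - 1) * qbinom q (m - 1) d"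
proof -
  have num: "(\<Prod>t<Suc d. (q ^ (m - t) - 1)) = (q ^ m - 1) * (\<Prod>t<d. (q ^ (m - 1 - t) - 1))"
    by (simp only: prod.lessThan_Suc_shift) (simp add: diff_diff_left)
  have den: "(\<Prod>t<Suc d. (q ^ (t + 1) - 1)) = (\<Prod>t<d. (q ^ (t + 1) - 1)) * (q ^ Suc d - 1)"
    by (simp only: prod.lessThan_Suc) simp
  have "qbinom q m (Suc d) = (\<Prod>t<Suc d. (q ^ (m - t) - 1)) / (\<Prod>t<Suc d. (q ^ (t + 1) - 1))"
    unfolding qbinom_def by (rule prod_dividef)
  also have "\<dots> = (q ^ m - 1) / (q ^ Suc d - 1) * ((\<Prod>t<d. (q ^ (m - 1 - t) - 1)) / (\<Prod>t<d. (q ^ (t + 1) - 1)))"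
    unfolding num den by simp
  also have "(\<Prod>t<d. (q ^ (m - 1 - t) - 1)) / (\<Prod>t<d. (q ^ (t + 1) - 1)) = qbinom q (m - 1) d"
    unfolding qbinom_def by (rule prod_dividef[symmetric])
  finally show ?thesis .
qed

lemma card_field_ge2: "2 \<le> CARD('a::{finite,field})"
proof -
  have "card {0::'a, 1} = 2" by simp
  moreover have "card {0::'a, 1} \<le> CARD('a)" by (rule card_mono) auto
  ultimately show ?thesis by simp
qed

lemma real_card_nonzero:
  fixes S :: "('a::{finite,field} ^ 'n::finite) set"
  assumes "vec.subspace S"
  shows "real (card (S - {0})) = real CARD('a) ^ vec.dim S - 1"
proof -
  have "0 \<in> S" using assms vec.subspace_0 by blast
  then have "card (S - {0}) = CARD('a) ^ vec.dim S - 1"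
    using card_subspace[OF assms] by (simp add: card_Diff_singleton)
  moreover have "0 < CARD('a) ^ vec.dim S" by simp
  ultimately have "real (card (S - {0})) = real (CARD('a) ^ vec.dim S) - real (1::nat)"
    using of_nat_diff[of 1 "CARD('a) ^ vec.dim S"] by linarith
  then show ?thesis by simp
qed

lemma count_sub:
  fixes U :: "('a::{finite,field} ^ 'n::finite) set"
  assumes "vec.subspace U"
  shows "real (card {S. vec.subspace S \<and> S \<subseteq> U \<and> vec.dim S = d}) = qbinom (real CARD('a)) (vec.dim U) d"
  using assms
proof (induction d arbitrary: U)
  case 0
  have "{S. vec.subspace S \<and> S \<subseteq> U \<and> vec.dim S = 0} = {{0}}"
    using dim_zero_sub 0 vec.subspace_0 vec.subspace_single_0 by auto
  then show ?case by simp
next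
  case (Suc d)
  define q where "q = real CARD('a)"
  define m where "m = vec.dim U"
  define Sub where "Sub = {S. vec.subspace S \<and> S \<subseteq> U \<and> vec.dim S = Suc d}"
  have q2: "q \<ge> 2" unfolding q_def using card_field_ge2[where 'a='a] by linarith
  have fSub: "finite Sub" by simp
  have fU: "finite (U - {0})" by simp
  have swap: "(\<Sum>S\<in>Sub. \<Sum>x\<in>{x \<in> U - {0}. x \<in> S}. (1::real)) = (\<Sum>x\<in>U - {0}. \<Sum>S\<in>{S \<in> Sub. x \<in> S}. 1)"
    by (rule sum.swap_restrict[OF fSub fU])
  have lhs: "(\<Sum>S\<in>Sub. \<Sum>x\<in>{x \<in> U - {0}. x \<in> S}. (1::real)) = real (card Sub) * (q ^ Suc d - 1)"
  proof -
    have "(\<Sum>x\<in>{x \<in> U - {0}. x \<in> S}. (1::real)) = q ^ Suc d - 1" if "S \<in> Sub" for S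
    proof -
      have "{x \<in> U - {0}. x \<in> S} = S - {0}" using that unfolding Sub_def by blast
      then show ?thesis using real_card_nonzero[of S] that unfolding Sub_def q_def by simp
    qed
    then show ?thesis by simp
  qed
  have rhs: "(\<Sum>x\<in>U - {0}. \<Sum>S\<in>{S \<in> Sub. x \<in> S}. (1::real)) = (q ^ m - 1) * qbinom q (m - 1) d"
  proof -
    have "(\<Sum>S\<in>{S \<in> Sub. x \<in> S}. (1::real)) = qbinom q (m - 1) d" if x: "x \<in> U - {0}" for x
    proof -
      let ?P = "vec.span {x}"
      have sP: "vec.subspace ?P" by (rule vec.subspace_span)
      have dP: "vec.dim ?P = 1" using x by simp
      have PU: "?P \<subseteq> U" using x Suc.prems vec.span_minimal by blast
      obtain H where H: "vec.subspace H" "H \<subseteq> U" "?P \<inter> H = {0}" "ssum ?P H = U"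
        "vec.dim H = vec.dim U - vec.dim ?P"
        using complement_exists[OF sP Suc.prems PU] by blast
      have "{S \<in> Sub. x \<in> S} = {S. vec.subspace S \<and> ?P \<subseteq> S \<and> S \<subseteq> U \<and> vec.dim S = vec.dim ?P + d}"
      proof -
        have "x \<in> S \<longleftrightarrow> ?P \<subseteq> S" if "vec.subspace S" for S
          using vec.span_minimal[of "{x}" S] vec.span_base[of x "{x}"] that by blast
        then show ?thesis unfolding Sub_def dP by auto
      qed
      then have "card {S \<in> Sub. x \<in> S} = card {T. vec.subspace T \<and> T \<subseteq> H \<and> vec.dim T = d}"
        using corr_card[OF sP H(1) Suc.prems H(3) H(4)] by simp
      then show ?thesis using Suc.IH[OF H(1)] H(5) dP unfolding q_def m_def by simp
    qed
    then have "(\<Sum>x\<in>U - {0}. \<Sum>S\<in>{S \<in> Sub. x \<in> S}. (1::real)) = real (card (U - {0})) * qbinom q (m - 1) d"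
      by simp
    then show ?thesis using real_card_nonzero[OF Suc.prems] unfolding q_def m_def by simp
  qed
  have "q ^ Suc d - 1 > 0" using q2
    by (smt (verit, ccfv_threshold) one_less_power zero_less_Suc)
  then have "real (card Sub) = (q ^ m - 1) / (q ^ Suc d - 1) * qbinom q (m - 1) d"
    using swap lhs rhs by (simp add: field_simps)
  then show ?case unfolding Sub_def q_def m_def qbinom_Suc by simp
qed

lemma pencil_count:
  fixes W p :: "('a::{finite,field} ^ 'n::finite) set"
  assumes "vec.subspace W" "vec.subspace p" "p \<subseteq> W" "vec.dim p = 1"
  shows "real (card {K. vec.subspace K \<and> K \<subseteq> W \<and> vec.dim K = Suc d \<and> p \<subseteq> K})
         = qbinom (real CARD('a)) (vec.dim W - 1) d"
proof -
  obtain H where H: "vec.subspace H" "H \<subseteq> W" "p \<inter> H = {0}" "ssum p H = W"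
      "vec.dim H = vec.dim W - vec.dim p"
    using complement_exists[OF assms(2,1,3)] by blast
  have "{K. vec.subspace K \<and> K \<subseteq> W \<and> vec.dim K = Suc d \<and> p \<subseteq> K}
      = {S. vec.subspace S \<and> p \<subseteq> S \<and> S \<subseteq> W \<and> vec.dim S = vec.dim p + d}"
    using assms by auto
  then have "card {K. vec.subspace K \<and> K \<subseteq> W \<and> vec.dim K = Suc d \<and> p \<subseteq> K}
      = card {T. vec.subspace T \<and> T \<subseteq> H \<and> vec.dim T = d}"
    using corr_card[OF assms(2) H(1) assms(1) H(3) H(4)] by simp
  then show ?thesis using count_sub[OF H(1)] H(5) assms by simp
qed


lemma qbinom_pos:
  assumes "q \<ge> 2" "b \<le> a"
  shows "qbinom q a b > 0"
  unfolding qbinom_def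
proof (rule prod_pos)
  fix t assume t: "t \<in> {..<b}"
  have "q ^ (a - t) > 1" using assms t by (intro one_less_power) auto
  moreover have "q ^ (t + 1) > 1" using assms by (intro one_less_power) auto
  ultimately show "0 < (q ^ (a - t) - 1) / (q ^ (t + 1) - 1)" by simp
qed

lemma sum_indic_card:
  assumes "finite A" "L \<subseteq> A"
  shows "(\<Sum>K\<in>A. (if K \<in> L then 1 else 0)) = real (card L)"
proof -
  have "(\<Sum>K\<in>A. (if K \<in> L then 1 else 0)) = (\<Sum>K\<in>{K \<in> A. K \<in> L}. (1::real))"
    using sum.inter_filter[OF assms(1), of "\<lambda>_. 1::real" "\<lambda>K. K \<in> L"] by simp
  also have "{K \<in> A. K \<in> L} = L" using assms by blast
  finally show ?thesis by simp
qed

lemma double_count: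
  assumes "finite A" "finite P"
  shows "(\<Sum>K\<in>A. \<Sum>p\<in>P. v p * (if p \<subseteq> K then 1 else 0))
       = (\<Sum>p\<in>P. v p * real (card {K \<in> A. p \<subseteq> K}))"
proof -
  have "(\<Sum>K\<in>A. \<Sum>p\<in>P. v p * (if p \<subseteq> K then 1 else 0))
      = (\<Sum>p\<in>P. \<Sum>K\<in>A. v p * (if p \<subseteq> K then 1 else 0))"
    by (rule sum.swap)
  also have "\<dots> = (\<Sum>p\<in>P. v p * (\<Sum>K\<in>A. (if p \<subseteq> K then 1 else 0)))"
    by (simp add: sum_distrib_left)
  also have "\<dots> = (\<Sum>p\<in>P. v p * real (card {K \<in> A. p \<subseteq> K}))"
  proof (rule sum.cong[OF refl])
    fix p
    have "(\<Sum>K\<in>A. (if p \<subseteq> K then 1 else 0)) = (\<Sum>K\<in>{K \<in> A. p \<subseteq> K}. (1::real))"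
      using sum.inter_filter[OF assms(1), of "\<lambda>_. 1::real" "\<lambda>K. p \<subseteq> K"] by simp
    then show "v p * (\<Sum>K\<in>A. (if p \<subseteq> K then 1 else 0)) = v p * real (card {K \<in> A. p \<subseteq> K})"
      by simp
  qed
  finally show ?thesis .
qed


theorem theorem6p13:
  fixes Hinf I \<pi> :: "('a::{finite,field} ^ 'n::finite) set"
    and L :: "('a ^ 'n) set set"
    and n k i :: nat and x :: real
  assumes n_def: "n = CARD('n) - 1"
    and Hinf: "Hinf \<in> proj_subspaces (n - 1) UNIV"
    and k: "k \<ge> 2"
    and L: "CL_set k UNIV Hinf L"
    and x: "x = CL_param k UNIV L"
    and i: "i \<le> k - 2"
    and I: "I \<in> proj_subspaces i Hinf"
    and pi: "\<pi> \<in> proj_subspaces (n - i - 1) UNIV"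
    and disj: "I \<inter> \<pi> = {0}"
    and n1: "n \<ge> 2 * k - i"
    and n2: "n \<ge> k + 2"
  shows "CL_set (k - i - 1) \<pi> (\<pi> \<inter> Hinf) ((\<lambda>K. K \<inter> \<pi>) ` {K \<in> L. I \<subseteq> K})
         \<and> CL_param (k - i - 1) \<pi> ((\<lambda>K. K \<inter> \<pi>) ` {K \<in> L. I \<subseteq> K}) = x"
proof -
  define q where "q = real CARD('a)"
  have q2: "q \<ge> 2" using card_field_ge2[where 'a='a] unfolding q_def by linarith
  have dU: "vec.dim (UNIV :: ('a ^ 'n) set) = n + 1" using vec_dim_card n_def by simp
  have sH: "vec.subspace Hinf" and dH: "vec.dim Hinf = n"
    using Hinf n2 unfolding proj_subspaces_def by auto
  have sI: "vec.subspace I" and IH: "I \<subseteq> Hinf" and dI: "vec.dim I = i + 1"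
    using I unfolding proj_subspaces_def by auto
  have sP: "vec.subspace \<pi>" and dP: "vec.dim \<pi> = n - i"
    using pi i k n2 unfolding proj_subspaces_def by auto
  have disj0: "I \<inter> \<pi> \<subseteq> {0}" using disj by blast
  have Ipi: "ssum I \<pi> = UNIV"
  proof -
    have "vec.dim (ssum I \<pi>) = n + 1" using dim_direct[OF sI sP disj0] dI dP i k n2 by simp
    then show ?thesis using subspace_eq_dim[OF ssum_subspace[OF sI sP] vec.subspace_UNIV] dU by simp
  qed
  have FA: "X = ssum I (X \<inter> \<pi>) \<and> vec.dim X = i + 1 + vec.dim (X \<inter> \<pi>)"
    if "vec.subspace X" "I \<subseteq> X" for X
  proof -
    have "X \<inter> ssum I \<pi> = ssum I (X \<inter> \<pi>)" using ssum_modular[OF sI that(1) sP that(2)] .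
    then have e: "X = ssum I (X \<inter> \<pi>)" using Ipi by simp
    have "I \<inter> (X \<inter> \<pi>) \<subseteq> {0}" using disj0 by blast
    then have "vec.dim (ssum I (X \<inter> \<pi>)) = vec.dim I + vec.dim (X \<inter> \<pi>)"
      using dim_direct[OF sI vec.subspace_inter[OF that(1) sP]] by blast
    then show ?thesis using e dI by simp
  qed
  have FB: "ssum I Y \<inter> \<pi> = Y \<and> vec.dim (ssum I Y) = i + 1 + vec.dim Y \<and> I \<subseteq> ssum I Y
            \<and> vec.subspace (ssum I Y) \<and> Y \<subseteq> ssum I Y"
    if "vec.subspace Y" "Y \<subseteq> \<pi>" for Y
  proof -
    have "I \<inter> Y \<subseteq> {0}" using disj0 that by blast
    then show ?thesis
      using ssum_cap_back[OF sI that(1) sP that(2) disj] dim_direct[OF sI that(1)] dI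
        ssum_left[OF that(1)] ssum_right[OF sI] ssum_subspace[OF sI that(1)] by simp
  qed
  obtain v :: "('a ^ 'n) set \<Rightarrow> real" where L_sub: "L \<subseteq> aff_spaces k UNIV Hinf"
    and hv: "\<forall>K \<in> aff_spaces k UNIV Hinf.
        (if K \<in> L then 1 else 0) = (\<Sum>p \<in> aff_points UNIV Hinf. v p * (if p \<subseteq> K then 1 else 0))"
    using L unfolding CL_set_def by blast
  define AP where "AP = aff_points (UNIV :: ('a ^ 'n) set) Hinf"
  define APP where "APP = aff_points \<pi> (\<pi> \<inter> Hinf)"
  define AS where "AS = aff_spaces k (UNIV :: ('a ^ 'n) set) Hinf"
  define ASP where "ASP = aff_spaces (k - i - 1) \<pi> (\<pi> \<inter> Hinf)"
  define J where "J = (\<lambda>K. K \<inter> \<pi>) ` {K \<in> L. I \<subseteq> K}"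
  define pr where "pr p = ssum I p \<inter> \<pi>" for p
  define w where "w p' = (\<Sum>p\<in>AP. v p * (if p \<subseteq> ssum I p' then 1 else 0))" for p'
  have AP_iff: "p \<in> AP \<longleftrightarrow> vec.subspace p \<and> vec.dim p = 1 \<and> \<not> p \<subseteq> Hinf" for p
    unfolding AP_def aff_points_def proj_subspaces_def by auto
  have APP_iff: "p \<in> APP \<longleftrightarrow> vec.subspace p \<and> p \<subseteq> \<pi> \<and> vec.dim p = 1 \<and> \<not> p \<subseteq> Hinf" for p
    unfolding APP_def aff_points_def proj_subspaces_def by auto
  have AS_iff: "K \<in> AS \<longleftrightarrow> vec.subspace K \<and> vec.dim K = k + 1 \<and> \<not> K \<subseteq> Hinf" for K
    unfolding AS_def aff_spaces_def proj_subspaces_def by auto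
  have ASP_iff: "K \<in> ASP \<longleftrightarrow> vec.subspace K \<and> K \<subseteq> \<pi> \<and> vec.dim K = k - i \<and> \<not> K \<subseteq> Hinf" for K
    unfolding ASP_def aff_spaces_def proj_subspaces_def using i k by auto

  have Ppr: "pr p \<in> APP \<and> p \<subseteq> ssum I (pr p) \<and> ssum I (pr p) = ssum I p" if p: "p \<in> AP" for p
  proof -
    have sp: "vec.subspace p" and dp: "vec.dim p = 1" and nH: "\<not> p \<subseteq> Hinf" using p AP_iff by auto
    have "\<not> p \<subseteq> I" using nH IH by blast
    then have "p \<inter> I = {0}" using point_disj[OF sp sI dp] by blast
    then have dj: "I \<inter> p \<subseteq> {0}" by blast
    define X where "X = ssum I p"
    have sX: "vec.subspace X" unfolding X_def using ssum_subspace[OF sI sp] .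
    have IX: "I \<subseteq> X" unfolding X_def using ssum_left[OF sp] .
    have pX: "p \<subseteq> X" unfolding X_def using ssum_right[OF sI] .
    have dX: "vec.dim X = i + 2" unfolding X_def using dim_direct[OF sI sp dj] dI dp by simp
    have fa: "X = ssum I (pr p)" "vec.dim X = i + 1 + vec.dim (pr p)"
      using FA[OF sX IX] unfolding pr_def X_def by auto
    have dpr: "vec.dim (pr p) = 1" using fa dX by simp
    have spr: "vec.subspace (pr p)" unfolding pr_def using vec.subspace_inter[OF ssum_subspace[OF sI sp] sP] .
    have "\<not> pr p \<subseteq> Hinf"
    proof
      assume "pr p \<subseteq> Hinf"
      then have "ssum I (pr p) \<subseteq> Hinf" using ssum_least[OF sH IH] by blast
      then show False using fa pX nH by blast
    qed
    then have "pr p \<in> APP" using APP_iff spr dpr unfolding pr_def by auto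
    then show ?thesis using fa pX unfolding X_def by auto
  qed
  have Pkey: "p \<subseteq> ssum I Y \<longleftrightarrow> pr p \<subseteq> Y" if p: "p \<in> AP" and Y: "vec.subspace Y" "Y \<subseteq> \<pi>" for p Y
  proof
    assume a: "p \<subseteq> ssum I Y"
    have "ssum I p \<subseteq> ssum I Y" using ssum_least[OF ssum_subspace[OF sI Y(1)]] a FB[OF Y] by blast
    then show "pr p \<subseteq> Y" using FB[OF Y] unfolding pr_def by blast
  next
    assume a: "pr p \<subseteq> Y"
    then show "p \<subseteq> ssum I Y" using Ppr[OF p] ssum_mono[of I I "pr p" Y] by blast
  qed
  have Ppt: "p \<subseteq> ssum I p' \<longleftrightarrow> p' = pr p" if p: "p \<in> AP" and p': "p' \<in> APP" for p p'
  proof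
    have sp': "vec.subspace p'" "p' \<subseteq> \<pi>" "vec.dim p' = 1" using p' APP_iff by auto
    assume "p \<subseteq> ssum I p'"
    then have sub: "pr p \<subseteq> p'" using Pkey[OF p sp'(1,2)] by blast
    have "vec.subspace (pr p)" "vec.dim (pr p) = 1" using Ppr[OF p] APP_iff by auto
    then show "p' = pr p" using subspace_eq_dim[OF _ sp'(1) sub] sp' by simp
  next
    assume "p' = pr p"
    then show "p \<subseteq> ssum I p'" using Ppr[OF p] by blast
  qed
  have key: "(\<Sum>p'\<in>APP. w p' * g p') = (\<Sum>p\<in>AP. v p * g (pr p))" for g :: "('a ^ 'n) set \<Rightarrow> real"
  proof -
    have "(\<Sum>p'\<in>APP. w p' * g p') = (\<Sum>p'\<in>APP. \<Sum>p\<in>AP. v p * ((if p \<subseteq> ssum I p' then 1 else 0) * g p'))"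
      unfolding w_def by (simp add: sum_distrib_right mult.assoc)
    also have "\<dots> = (\<Sum>p\<in>AP. \<Sum>p'\<in>APP. v p * ((if p \<subseteq> ssum I p' then 1 else 0) * g p'))"
      by (rule sum.swap)
    also have "\<dots> = (\<Sum>p\<in>AP. v p * (\<Sum>p'\<in>APP. (if p \<subseteq> ssum I p' then 1 else 0) * g p'))"
      by (simp add: sum_distrib_left)
    also have "\<dots> = (\<Sum>p\<in>AP. v p * g (pr p))"
    proof (rule sum.cong[OF refl])
      fix p assume p: "p \<in> AP"
      have "(\<Sum>p'\<in>APP. (if p \<subseteq> ssum I p' then 1 else 0) * g p') = (\<Sum>p'\<in>APP. (if p' = pr p then g p' else 0))"
        by (rule sum.cong[OF refl]) (simp add: Ppt[OF p])
      also have "\<dots> = g (pr p)" using Ppr[OF p] by simp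
      finally show "v p * (\<Sum>p'\<in>APP. (if p \<subseteq> ssum I p' then 1 else 0) * g p') = v p * g (pr p)" by simp
    qed
    finally show ?thesis .
  qed
  have Kcap: "K \<inter> \<pi> \<in> ASP \<and> K = ssum I (K \<inter> \<pi>)" if K: "K \<in> L" "I \<subseteq> K" for K
  proof -
    have KA: "vec.subspace K" "vec.dim K = k + 1" "\<not> K \<subseteq> Hinf" using K L_sub AS_iff unfolding AS_def by auto
    have fa: "K = ssum I (K \<inter> \<pi>)" "vec.dim K = i + 1 + vec.dim (K \<inter> \<pi>)" using FA[OF KA(1) K(2)] by auto
    have "\<not> K \<inter> \<pi> \<subseteq> Hinf"
    proof
      assume "K \<inter> \<pi> \<subseteq> Hinf"
      then have "ssum I (K \<inter> \<pi>) \<subseteq> Hinf" using ssum_least[OF sH IH] by blast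
      then show False using fa KA by blast
    qed
    moreover have "vec.dim (K \<inter> \<pi>) = k - i" using fa KA by simp
    moreover have "vec.subspace (K \<inter> \<pi>)" using vec.subspace_inter[OF KA(1) sP] .
    ultimately show ?thesis using ASP_iff fa by auto
  qed
  have J_sub: "J \<subseteq> ASP" unfolding J_def using Kcap by blast
  have Kup: "ssum I K' \<in> AS \<and> (K' \<in> J \<longleftrightarrow> ssum I K' \<in> L)" if K': "K' \<in> ASP" for K'
  proof -
    have KP: "vec.subspace K'" "K' \<subseteq> \<pi>" "vec.dim K' = k - i" "\<not> K' \<subseteq> Hinf" using K' ASP_iff by auto
    have fb: "ssum I K' \<inter> \<pi> = K'" "vec.dim (ssum I K') = i + 1 + vec.dim K'" "I \<subseteq> ssum I K'"
      "vec.subspace (ssum I K')" "K' \<subseteq> ssum I K'" using FB[OF KP(1,2)] by auto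
    have "ssum I K' \<in> AS" using AS_iff fb KP i k by auto
    moreover have "K' \<in> J \<longleftrightarrow> ssum I K' \<in> L"
    proof
      assume "K' \<in> J"
      then obtain K where "K \<in> L" "I \<subseteq> K" "K' = K \<inter> \<pi>" unfolding J_def by blast
      then show "ssum I K' \<in> L" using Kcap by auto
    next
      assume "ssum I K' \<in> L"
      then have m: "ssum I K' \<in> {K \<in> L. I \<subseteq> K}" using fb by blast
      have "K' = ssum I K' \<inter> \<pi>" using fb by simp
      then show "K' \<in> J" unfolding J_def using m by (rule image_eqI)
    qed
    ultimately show ?thesis by blast
  qed
  have finAPP: "finite APP" and finAP: "finite AP" and finASP: "finite ASP" and finAS: "finite AS" by simp_all
  have CLJ: "\<forall>K'\<in>ASP. (if K' \<in> J then 1 else 0) = (\<Sum>p'\<in>APP. w p' * (if p' \<subseteq> K' then 1 else 0))"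
  proof
    fix K' assume K': "K' \<in> ASP"
    have KP: "vec.subspace K'" "K' \<subseteq> \<pi>" using K' ASP_iff by auto
    have "(if K' \<in> J then 1 else 0) = (if ssum I K' \<in> L then 1 else (0::real))" using Kup[OF K'] by simp
    also have "\<dots> = (\<Sum>p\<in>AP. v p * (if p \<subseteq> ssum I K' then 1 else 0))"
      using hv Kup[OF K'] unfolding AS_def AP_def by blast
    also have "\<dots> = (\<Sum>p\<in>AP. v p * (if pr p \<subseteq> K' then 1 else 0))"
      by (rule sum.cong[OF refl]) (simp add: Pkey[OF _ KP])
    also have "\<dots> = (\<Sum>p'\<in>APP. w p' * (if p' \<subseteq> K' then 1 else 0))"
      using key[of "\<lambda>p'. if p' \<subseteq> K' then 1 else 0"] by simp
    finally show "(if K' \<in> J then 1 else 0) = (\<Sum>p'\<in>APP. w p' * (if p' \<subseteq> K' then 1 else 0))" .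
  qed
  have part1: "CL_set (k - i - 1) \<pi> (\<pi> \<inter> Hinf) J"
    unfolding CL_set_def using J_sub CLJ unfolding ASP_def APP_def by blast
  have qbL: "qbinom q n k > 0" using qbinom_pos[OF q2] n2 by simp
  have qbJ: "qbinom q (n - i - 1) (k - i - 1) > 0" using qbinom_pos[OF q2] n2 by simp
  have cardL: "real (card L) = (\<Sum>p\<in>AP. v p) * qbinom q n k"
  proof -
    have "real (card L) = (\<Sum>K\<in>AS. (if K \<in> L then 1 else 0))"
      using sum_indic_card[OF finAS] L_sub unfolding AS_def by simp
    also have "\<dots> = (\<Sum>K\<in>AS. \<Sum>p\<in>AP. v p * (if p \<subseteq> K then 1 else 0))"
      using hv unfolding AS_def AP_def by simp
    also have "\<dots> = (\<Sum>p\<in>AP. v p * real (card {K \<in> AS. p \<subseteq> K}))"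
      by (rule double_count[OF finAS finAP])
    also have "\<dots> = (\<Sum>p\<in>AP. v p * qbinom q n k)"
    proof (rule sum.cong[OF refl])
      fix p assume p: "p \<in> AP"
      have pp: "vec.subspace p" "vec.dim p = 1" "\<not> p \<subseteq> Hinf" using p AP_iff by auto
      have "{K \<in> AS. p \<subseteq> K} = {K. vec.subspace K \<and> K \<subseteq> UNIV \<and> vec.dim K = Suc k \<and> p \<subseteq> K}"
        using AS_iff pp by auto
      then have "real (card {K \<in> AS. p \<subseteq> K}) = qbinom q n k"
        using pencil_count[OF vec.subspace_UNIV pp(1) subset_UNIV pp(2), of k] dU unfolding q_def by simp
      then show "v p * real (card {K \<in> AS. p \<subseteq> K}) = v p * qbinom q n k" by simp
    qed
    finally show ?thesis by (simp add: sum_distrib_right)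
  qed
  have cardJ: "real (card J) = (\<Sum>p\<in>AP. v p) * qbinom q (n - i - 1) (k - i - 1)"
  proof -
    have "real (card J) = (\<Sum>K\<in>ASP. (if K \<in> J then 1 else 0))"
      using sum_indic_card[OF finASP J_sub] by simp
    also have "\<dots> = (\<Sum>K\<in>ASP. \<Sum>p\<in>APP. w p * (if p \<subseteq> K then 1 else 0))"
      using CLJ by simp
    also have "\<dots> = (\<Sum>p\<in>APP. w p * real (card {K \<in> ASP. p \<subseteq> K}))"
      by (rule double_count[OF finASP finAPP])
    also have "\<dots> = (\<Sum>p\<in>APP. w p * qbinom q (n - i - 1) (k - i - 1))"
    proof (rule sum.cong[OF refl])
      fix p assume p: "p \<in> APP"
      have pp: "vec.subspace p" "p \<subseteq> \<pi>" "vec.dim p = 1" "\<not> p \<subseteq> Hinf" using p APP_iff by auto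
      have "{K \<in> ASP. p \<subseteq> K} = {K. vec.subspace K \<and> K \<subseteq> \<pi> \<and> vec.dim K = Suc (k - i - 1) \<and> p \<subseteq> K}"
        using ASP_iff pp i k by auto
      then have "real (card {K \<in> ASP. p \<subseteq> K}) = qbinom q (n - i - 1) (k - i - 1)"
        using pencil_count[OF sP pp(1) pp(2) pp(3), of "k - i - 1"] dP unfolding q_def by simp
      then show "w p * real (card {K \<in> ASP. p \<subseteq> K}) = w p * qbinom q (n - i - 1) (k - i - 1)" by simp
    qed
    also have "\<dots> = (\<Sum>p\<in>APP. w p * 1) * qbinom q (n - i - 1) (k - i - 1)"
      by (simp add: sum_distrib_right)
    also have "(\<Sum>p\<in>APP. w p * 1) = (\<Sum>p\<in>AP. v p * 1)" by (rule key)
    finally show ?thesis by simp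
  qed
  have xval: "x = (\<Sum>p\<in>AP. v p)"
    using x cardL qbL dU unfolding CL_param_def q_def by simp
  have part2: "CL_param (k - i - 1) \<pi> J = x"
    using cardJ qbJ dP xval unfolding CL_param_def q_def by (simp add: diff_diff_left)
  show ?thesis using part1 part2 unfolding J_def by simp
qed

end
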